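(* Let $k$ be a field of characteristic zero, $n\ge1$, $S=k[x_1,\ldots,x_n]$, and $(S,L)$ a triangularizable Lie–Rinehart algebra with enveloping algebra $U$. Then the inclusion $S\subseteq U$ induces an isomorphism $H^0(S,U)\cong S$; that is, $H^0(S,U)=\{u\in U:[u,s]=0\text{ for all }s\in S\}$ equals $S$.
   Context: Triangularizable: $L\subseteq\operatorname{Der}(S)$ is an $S$-submodule and Lie subalgebra which is a free $S$-module with basis of derivations $\alpha_1,\ldots,\alpha_n$ such that $\alpha_i(x_j)=0$ for $i>j$ and $\alpha_1(x_1)\cdots\alpha_n(x_n)\ne0$. $U$ is the universal enveloping algebra of $(S,L)$ (containing $S$ as a subalgebra). $H^\bullet(S,U)=\operatorname{Ext}^\bullet_{S\otimes S}(S,U)$ is the Hochschild cohomology of $S$ with values in the $S$-bimodule $U$; in degree zero it is the centralizer of $S$ in $U$. *)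

theory Defs
  imports Main "HOL-Library.Poly_Mapping"
begin

text \<open>Polynomial ring S = k[x_i : i in 'n] (variables indexed by a finite linearly
ordered type 'n, so n = CARD('n) >= 1), realised as finitely supported maps from
monomials (exponent vectors) to coefficients.\<close>

type_synonym ('n, 'k) mpoly = "('n \<Rightarrow>\<^sub>0 nat) \<Rightarrow>\<^sub>0 'k"

definition Var :: "'n \<Rightarrow> ('n, 'k::comm_ring_1) mpoly" where
  "Var j = Poly_Mapping.single (Poly_Mapping.single j 1) 1"

definition Const :: "'k \<Rightarrow> ('n, 'k::comm_ring_1) mpoly" where
  "Const c = Poly_Mapping.single 0 c"

definition is_derivation :: "(('n, 'k::comm_ring_1) mpoly \<Rightarrow> ('n, 'k) mpoly) \<Rightarrow> bool" where
  "is_derivation D \<longleftrightarrow>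
     (\<forall>f g. D (f + g) = D f + D g) \<and>
     (\<forall>c f. D (Const c * f) = Const c * D f) \<and>
     (\<forall>f g. D (f * g) = D f * g + f * D g)"

definition Der :: "(('n, 'k::comm_ring_1) mpoly \<Rightarrow> ('n, 'k) mpoly) set" where
  "Der = {D. is_derivation D}"

definition triangularizable ::
  "(('n::{finite,linorder}, 'k::comm_ring_1) mpoly \<Rightarrow> ('n, 'k) mpoly) set \<Rightarrow>
   ('n \<Rightarrow> ('n, 'k) mpoly \<Rightarrow> ('n, 'k) mpoly) \<Rightarrow> bool" where
  "triangularizable L \<alpha> \<longleftrightarrow>
     L \<subseteq> Der \<and>
     (\<lambda>f. 0) \<in> L \<and>
     (\<forall>D\<in>L. \<forall>E\<in>L. (\<lambda>f. D f + E f) \<in> L) \<and>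
     (\<forall>s. \<forall>D\<in>L. (\<lambda>f. s * D f) \<in> L) \<and>
     (\<forall>D\<in>L. \<forall>E\<in>L. (\<lambda>f. D (E f) - E (D f)) \<in> L) \<and>
     (\<forall>i. \<alpha> i \<in> L) \<and>
     (\<forall>D\<in>L. \<exists>!s :: 'n \<Rightarrow> ('n, 'k) mpoly. D = (\<lambda>f. \<Sum>i\<in>UNIV. s i * \<alpha> i f)) \<and>
     (\<forall>i j. j < i \<longrightarrow> \<alpha> i (Var j) = 0) \<and>
     (\<Prod>i\<in>UNIV. \<alpha> i (Var i)) \<noteq> 0"

text \<open>The free associative unital k-algebra on generators 'g: finitely supported
k-linear combinations of words.\<close>

type_synonym ('g, 'k) freealg = "'g list \<Rightarrow>\<^sub>0 'k"

definition fmult :: "('g, 'k::comm_ring_1) freealg \<Rightarrow> ('g, 'k) freealg \<Rightarrow> ('g, 'k) freealg" where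
  "fmult p q = (\<Sum>u\<in>Poly_Mapping.keys p. \<Sum>v\<in>Poly_Mapping.keys q.
                  Poly_Mapping.single (u @ v) (Poly_Mapping.lookup p u * Poly_Mapping.lookup q v))"

definition fconst :: "'k \<Rightarrow> ('g, 'k::comm_ring_1) freealg" where
  "fconst c = Poly_Mapping.single [] c"

definition fgen :: "'g \<Rightarrow> ('g, 'k::comm_ring_1) freealg" where
  "fgen g = Poly_Mapping.single [g] 1"

inductive_set twosided_ideal :: "('g, 'k::comm_ring_1) freealg set \<Rightarrow> ('g, 'k) freealg set"
  for R where
  base: "r \<in> R \<Longrightarrow> r \<in> twosided_ideal R"
| zero: "0 \<in> twosided_ideal R"
| add: "a \<in> twosided_ideal R \<Longrightarrow> b \<in> twosided_ideal R \<Longrightarrow> a + b \<in> twosided_ideal R"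
| lmult: "a \<in> twosided_ideal R \<Longrightarrow> fmult c a \<in> twosided_ideal R"
| rmult: "a \<in> twosided_ideal R \<Longrightarrow> fmult a c \<in> twosided_ideal R"

text \<open>Universal enveloping algebra U of (S, L) (Rinehart): the free k-algebra on
generators iota_S(s) (s in S) and iota_L(D) (D in L) modulo the relations below.
Generators iota_L(D) for D not in L are killed. U = freealg / UEA_ideal L.\<close>

type_synonym ('n, 'k) lrgen = "('n, 'k) mpoly + (('n, 'k) mpoly \<Rightarrow> ('n, 'k) mpoly)"

definition iS :: "('n, 'k::comm_ring_1) mpoly \<Rightarrow> (('n, 'k) lrgen, 'k) freealg" where
  "iS s = fgen (Inl s)"

definition iL :: "(('n, 'k::comm_ring_1) mpoly \<Rightarrow> ('n, 'k) mpoly) \<Rightarrow> (('n, 'k) lrgen, 'k) freealg" where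
  "iL D = fgen (Inr D)"

definition UEA_relations ::
  "(('n, 'k::comm_ring_1) mpoly \<Rightarrow> ('n, 'k) mpoly) set \<Rightarrow> (('n, 'k) lrgen, 'k) freealg set" where
  "UEA_relations L =
     {iS (s + t) - iS s - iS t | s t. True} \<union>
     {iS (s * t) - fmult (iS s) (iS t) | s t. True} \<union>
     {iS (Const c) - fconst c | c. True} \<union>
     {iL (\<lambda>f. D f + E f) - iL D - iL E | D E. D \<in> L \<and> E \<in> L} \<union>
     {iL (\<lambda>f. s * D f) - fmult (iS s) (iL D) | s D. D \<in> L} \<union>
     {fmult (iL D) (iL E) - fmult (iL E) (iL D) - iL (\<lambda>f. D (E f) - E (D f)) | D E. D \<in> L \<and> E \<in> L} \<union>
     {fmult (iL D) (iS s) - fmult (iS s) (iL D) - iS (D s) | s D. D \<in> L} \<union>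
     {iL D | D. D \<notin> L}"

definition UEA_ideal ::
  "(('n, 'k::comm_ring_1) mpoly \<Rightarrow> ('n, 'k) mpoly) set \<Rightarrow> (('n, 'k) lrgen, 'k) freealg set" where
  "UEA_ideal L = twosided_ideal (UEA_relations L)"

end

theory Submission
  imports Defs "HOL-Computational_Algebra.Polynomial" "HOL-Library.Multiset"
begin

instantiation list :: (type) monoid_add
begin
definition zero_list_def: "(0::'a list) = []"
definition plus_list_def: "(xs::'a list) + ys = xs @ ys"
instance by standard (auto simp: zero_list_def plus_list_def)
end

lemma pm_sum_singles: "(p::'a \<Rightarrow>\<^sub>0 'b::comm_monoid_add) = (\<Sum>w\<in>Poly_Mapping.keys p. Poly_Mapping.single w (Poly_Mapping.lookup p w))"
proof (rule poly_mapping_eqI)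
  fix k
  show "Poly_Mapping.lookup p k = Poly_Mapping.lookup (\<Sum>w\<in>Poly_Mapping.keys p. Poly_Mapping.single w (Poly_Mapping.lookup p w)) k"
    by (auto simp: lookup_sum lookup_single when_def in_keys_iff)
qed

lemma fmult_eq: "fmult p (q::('g,'k::comm_ring_1) freealg) = p * q"
proof -
  have "p * q = (\<Sum>w\<in>Poly_Mapping.keys p. Poly_Mapping.single w (Poly_Mapping.lookup p w)) * (\<Sum>w\<in>Poly_Mapping.keys q. Poly_Mapping.single w (Poly_Mapping.lookup q w))"
    using pm_sum_singles[of p] pm_sum_singles[of q] by simp
  also have "\<dots> = fmult p q"
    by (simp add: fmult_def sum_product mult_single plus_list_def)
  finally show ?thesis by simp
qed

lemma fconst_eq: "fconst c = (Poly_Mapping.single [] c :: ('g,'k::comm_ring_1) freealg)"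
  by (simp add: fconst_def)

lemma one_fa: "(1::('g,'k::comm_ring_1) freealg) = Poly_Mapping.single [] 1"
  by (metis single_one zero_list_def)

lemma fconst_mult: "fconst c * p = Poly_Mapping.map ((*) c) (p::('g,'k::comm_ring_1) freealg)"
  by (simp add: fconst_def mult_map_scale_conv_mult zero_list_def)


lemma TI_add: "a \<in> twosided_ideal R \<Longrightarrow> b \<in> twosided_ideal R \<Longrightarrow> a + b \<in> twosided_ideal R"
  by (rule twosided_ideal.add)
lemma TI_lmult: "a \<in> twosided_ideal R \<Longrightarrow> c * a \<in> twosided_ideal R"
  using twosided_ideal.lmult[of a R c] by (simp add: fmult_eq)
lemma TI_rmult: "a \<in> twosided_ideal R \<Longrightarrow> a * c \<in> twosided_ideal R"
  using twosided_ideal.rmult[of a R c] by (simp add: fmult_eq)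
lemma TI_zero: "0 \<in> twosided_ideal R"
  by (rule twosided_ideal.zero)
lemma TI_uminus: "a \<in> twosided_ideal R \<Longrightarrow> - a \<in> twosided_ideal R"
  using TI_lmult[of a R "-1"] by simp
lemma TI_diff: "a \<in> twosided_ideal R \<Longrightarrow> b \<in> twosided_ideal R \<Longrightarrow> a - b \<in> twosided_ideal R"
  using TI_add[OF _ TI_uminus] by (metis diff_conv_add_uminus)
lemma TI_sum: "(\<And>x. x \<in> X \<Longrightarrow> f x \<in> twosided_ideal R) \<Longrightarrow> sum f X \<in> twosided_ideal R"
  by (induction X rule: infinite_finite_induct) (auto intro: TI_zero TI_add)
lemma TI_sum_list: "(\<And>x. x \<in> set xs \<Longrightarrow> f x \<in> twosided_ideal R) \<Longrightarrow> sum_list (map f xs) \<in> twosided_ideal R"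
  by (induction xs) (auto intro: TI_zero TI_add)


lemma Const_add: "Const (a + b) = Const a + (Const b :: ('n,'k::comm_ring_1) mpoly)"
  by (simp add: Const_def single_add)
lemma Const_mult: "Const (a * b) = Const a * (Const b :: ('n,'k::comm_ring_1) mpoly)"
  by (simp add: Const_def mult_single)
lemma Const_zero [simp]: "Const 0 = (0 :: ('n,'k::comm_ring_1) mpoly)"
  by (simp add: Const_def)
lemma Const_one [simp]: "Const 1 = (1 :: ('n,'k::comm_ring_1) mpoly)"
  by (simp add: Const_def)
lemma Const_of_nat: "Const (of_nat n) = (of_nat n :: ('n,'k::comm_ring_1) mpoly)"
  by (simp add: Const_def)

context
  fixes D :: "('n,'k::comm_ring_1) mpoly \<Rightarrow> ('n,'k) mpoly"
  assumes der: "is_derivation D"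
begin
lemma D_add: "D (f + g) = D f + D g" using der unfolding is_derivation_def by blast
lemma D_const: "D (Const c * f) = Const c * D f" using der unfolding is_derivation_def by blast
lemma D_mult: "D (f * g) = D f * g + f * D g" using der unfolding is_derivation_def by blast
lemma D_zero: "D 0 = 0" using D_add[of 0 0] by simp
lemma D_uminus: "D (- f) = - D f" using D_add[of f "-f"] by (simp add: D_zero add_eq_0_iff2)
lemma D_diff: "D (f - g) = D f - D g" using D_add[of f "-g"] by (simp add: D_uminus)
lemma D_sum: "D (sum h X) = (\<Sum>x\<in>X. D (h x))"
  by (induction X rule: infinite_finite_induct) (auto simp: D_zero D_add)
lemma D_of_nat: "D (of_nat n * f) = of_nat n * D f"
  using D_const[of "of_nat n" f] by (simp add: Const_of_nat)
lemma D_one: "D 1 = 0" using D_mult[of 1 1] by simp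
lemma D_power: "D (g ^ N) = of_nat N * g ^ (N - 1) * D g"
proof (induction N)
  case 0 then show ?case by (simp add: D_one)
next
  case (Suc N)
  show ?case
  proof (cases N)
    case 0 then show ?thesis by simp
  next
    case (Suc M)
    have "D (g ^ Suc N) = D g * g ^ N + g * (of_nat N * g ^ (N - 1) * D g)"
      using Suc.IH by (simp add: D_mult)
    also have "\<dots> = of_nat (Suc N) * g ^ N * D g"
      using Suc by (simp add: algebra_simps)
    finally show ?thesis by simp
  qed
qed
end

lemma der_Der: "D \<in> Der \<Longrightarrow> is_derivation D" by (simp add: Der_def)

locale tri =
  fixes L :: "(('n::{finite,linorder}, 'k::field_char_0) mpoly \<Rightarrow> ('n, 'k) mpoly) set"
    and \<alpha> :: "'n \<Rightarrow> ('n, 'k) mpoly \<Rightarrow> ('n, 'k) mpoly"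
  assumes tri: "triangularizable L \<alpha>"
begin

lemma L_Der: "D \<in> L \<Longrightarrow> is_derivation D"
  using tri by (auto simp: triangularizable_def Der_def)
lemma L_zero: "(\<lambda>f. 0) \<in> L" using tri by (simp add: triangularizable_def)
lemma L_add: "D \<in> L \<Longrightarrow> E \<in> L \<Longrightarrow> (\<lambda>f. D f + E f) \<in> L" using tri by (simp add: triangularizable_def)
lemma L_smult: "D \<in> L \<Longrightarrow> (\<lambda>f. s * D f) \<in> L" using tri by (simp add: triangularizable_def)
lemma L_br: "D \<in> L \<Longrightarrow> E \<in> L \<Longrightarrow> (\<lambda>f. D (E f) - E (D f)) \<in> L" using tri by (simp add: triangularizable_def)
lemma L_alpha: "\<alpha> i \<in> L" using tri by (simp add: triangularizable_def)
lemma L_basis: "D \<in> L \<Longrightarrow> \<exists>s. D = (\<lambda>f. \<Sum>i\<in>UNIV. s i * \<alpha> i f)" using tri by (auto simp: triangularizable_def)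
lemma alpha_tri: "j < i \<Longrightarrow> \<alpha> i (Var j) = 0" using tri by (simp add: triangularizable_def)
lemma alpha_diag: "\<alpha> i (Var i) \<noteq> 0"
  using tri by (auto simp: triangularizable_def)
lemma alpha_der: "is_derivation (\<alpha> i)" by (rule L_Der[OF L_alpha])

abbreviation I where "I \<equiv> UEA_ideal L"

definition gact :: "('n,'k) lrgen \<Rightarrow> ('n,'k) mpoly \<Rightarrow> ('n,'k) mpoly" where
  "gact x f = (case x of Inl s \<Rightarrow> s * f | Inr D \<Rightarrow> if D \<in> L then D f else 0)"

primrec wact :: "('n,'k) lrgen list \<Rightarrow> ('n,'k) mpoly \<Rightarrow> ('n,'k) mpoly" where
  "wact [] f = f"
| "wact (x # w) f = gact x (wact w f)"

definition rho :: "(('n,'k) lrgen, 'k) freealg \<Rightarrow> ('n,'k) mpoly \<Rightarrow> ('n,'k) mpoly" where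
  "rho p f = (\<Sum>w\<in>Poly_Mapping.keys p. Const (Poly_Mapping.lookup p w) * wact w f)"

lemma gact_add: "gact x (f + g) = gact x f + gact x g"
  by (auto simp: gact_def algebra_simps D_add L_Der split: sum.split)
lemma gact_const: "gact x (Const c * f) = Const c * gact x f"
  by (auto simp: gact_def D_const L_Der split: sum.split)
lemma wact_add: "wact w (f + g) = wact w f + wact w g"
  by (induction w) (auto simp: gact_add)
lemma wact_const: "wact w (Const c * f) = Const c * wact w f"
  by (induction w) (auto simp: gact_const)
lemma wact_zero: "wact w 0 = 0"
  using wact_add[of w 0 0] by simp
lemma wact_sum: "wact w (sum h X) = (\<Sum>x\<in>X. wact w (h x))"
  by (induction X rule: infinite_finite_induct) (auto simp: wact_zero wact_add)
lemma wact_append: "wact (u @ v) f = wact u (wact v f)"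
  by (induction u) auto

lemma rho_superset: "finite K \<Longrightarrow> Poly_Mapping.keys p \<subseteq> K \<Longrightarrow>
   rho p f = (\<Sum>w\<in>K. Const (Poly_Mapping.lookup p w) * wact w f)"
  unfolding rho_def by (rule sum.mono_neutral_left) (auto simp: in_keys_iff)

lemma rho_add: "rho (p + q) f = rho p f + rho q f"
proof -
  let ?K = "Poly_Mapping.keys p \<union> Poly_Mapping.keys q"
  have k: "Poly_Mapping.keys (p + q) \<subseteq> ?K" by (rule keys_add)
  show ?thesis
    by (simp add: rho_superset[OF _ k] rho_superset[of ?K p] rho_superset[of ?K q]
        lookup_add Const_add algebra_simps sum.distrib)
qed

lemma rho_zero [simp]: "rho 0 f = 0" by (simp add: rho_def)
lemma rho_uminus: "rho (- p) f = - rho p f"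
  using rho_add[of p "-p" f] by (simp add: add_eq_0_iff2)
lemma rho_diff: "rho (p - q) f = rho p f - rho q f"
  using rho_add[of p "-q" f] by (simp add: rho_uminus)
lemma rho_sum: "rho (sum h X) f = (\<Sum>x\<in>X. rho (h x) f)"
  by (induction X rule: infinite_finite_induct) (auto simp: rho_add)
lemma rho_sum_list: "rho (sum_list (map h xs)) f = (\<Sum>x\<leftarrow>xs. rho (h x) f)"
  by (induction xs) (auto simp: rho_add)
lemma rho_single: "rho (Poly_Mapping.single w c) f = Const c * wact w f"
  by (simp add: rho_superset[of "{w}"])
lemma rho_f_add: "rho p (f + g) = rho p f + rho p g"
  by (simp add: rho_def wact_add algebra_simps sum.distrib)
lemma rho_f_zero: "rho p 0 = 0"
  by (simp add: rho_def wact_zero)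
lemma rho_f_const: "rho p (Const c * f) = Const c * rho p f"
  unfolding rho_def wact_const by (simp add: sum_distrib_left mult.left_commute)
lemma rho_f_sum: "rho p (sum h X) = (\<Sum>x\<in>X. rho p (h x))"
  by (induction X rule: infinite_finite_induct) (auto simp: rho_f_zero rho_f_add)

lemma rho_mult: "rho (p * q) f = rho p (rho q f)"
proof -
  have "p * q = (\<Sum>u\<in>Poly_Mapping.keys p. Poly_Mapping.single u (Poly_Mapping.lookup p u)) * (\<Sum>v\<in>Poly_Mapping.keys q. Poly_Mapping.single v (Poly_Mapping.lookup q v))"
    using pm_sum_singles[of p] pm_sum_singles[of q] by simp
  also have "\<dots> = (\<Sum>u\<in>Poly_Mapping.keys p. \<Sum>v\<in>Poly_Mapping.keys q. Poly_Mapping.single (u @ v) (Poly_Mapping.lookup p u * Poly_Mapping.lookup q v))"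
    by (simp add: sum_product mult_single plus_list_def)
  finally have pq: "p * q = \<dots>" .
  have "rho (p * q) f = (\<Sum>u\<in>Poly_Mapping.keys p. \<Sum>v\<in>Poly_Mapping.keys q. Const (Poly_Mapping.lookup p u) * (Const (Poly_Mapping.lookup q v) * wact u (wact v f)))"
    unfolding pq by (simp add: rho_sum rho_single wact_append Const_mult mult.assoc)
  also have "\<dots> = rho p (rho q f)"
    by (simp add: rho_def wact_sum wact_const sum_distrib_left)
  finally show ?thesis .
qed

lemma rho_iS: "rho (iS s) f = s * f"
  by (simp add: iS_def fgen_def rho_single gact_def)
lemma rho_iL: "rho (iL D) f = (if D \<in> L then D f else 0)"
  by (simp add: iL_def fgen_def rho_single gact_def)
lemma rho_fconst: "rho (fconst c) f = Const c * f"
  by (simp add: fconst_def rho_single)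
lemma rho_one: "rho 1 f = f"
  by (simp add: one_fa rho_single)

lemma rho_rel: "r \<in> UEA_relations L \<Longrightarrow> rho r f = 0"
proof -
  assume r: "r \<in> UEA_relations L"
  have h1: "rho (iS (s + t) - iS s - iS t) f = 0" for s t by (simp add: rho_diff rho_add rho_iS algebra_simps)
  have h2: "rho (iS (s * t) - fmult (iS s) (iS t)) f = 0" for s t by (simp add: fmult_eq rho_diff rho_mult rho_iS algebra_simps)
  have h3: "rho (iS (Const c) - fconst c) f = 0" for c by (simp add: rho_diff rho_iS rho_fconst)
  have h4: "rho (iL (\<lambda>f. D f + E f) - iL D - iL E) f = 0" if "D \<in> L" "E \<in> L" for D E
    using that by (simp add: rho_diff rho_iL L_add)
  have h5: "rho (iL (\<lambda>f. s * D f) - fmult (iS s) (iL D)) f = 0" if "D \<in> L" for s D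
    using that by (simp add: fmult_eq rho_diff rho_mult rho_iS rho_iL L_smult)
  have h6: "rho (fmult (iL D) (iL E) - fmult (iL E) (iL D) - iL (\<lambda>f. D (E f) - E (D f))) f = 0" if "D \<in> L" "E \<in> L" for D E
    using that by (simp add: fmult_eq rho_diff rho_mult rho_iL L_br)
  have h7: "rho (fmult (iL D) (iS s) - fmult (iS s) (iL D) - iS (D s)) f = 0" if "D \<in> L" for s D
    using that by (simp add: fmult_eq rho_diff rho_add rho_mult rho_iS rho_iL D_mult L_Der algebra_simps)
  have h8: "rho (iL D) f = 0" if "D \<notin> L" for D
    using that by (simp add: rho_iL)
  from r show ?thesis
    unfolding UEA_relations_def
    by (elim UnE CollectE exE conjE) (simp_all only: h1 h2 h3 h4 h5 h6 h7 h8 not_False_eq_True)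
qed

lemma rho_I: "a \<in> I \<Longrightarrow> rho a f = 0"
  unfolding UEA_ideal_def
proof (induction a arbitrary: f rule: twosided_ideal.induct)
  case (base r) then show ?case by (rule rho_rel)
next
  case zero then show ?case by simp
next
  case (add a b) then show ?case by (simp add: rho_add)
next
  case (lmult a c) then show ?case by (simp add: fmult_eq rho_mult rho_f_zero)
next
  case (rmult a c) then show ?case by (simp add: fmult_eq rho_mult)
qed

end

context tri
begin

lemma I_rel: "r \<in> UEA_relations L \<Longrightarrow> r \<in> I"
  unfolding UEA_ideal_def by (rule twosided_ideal.base)
lemma I_add: "a \<in> I \<Longrightarrow> b \<in> I \<Longrightarrow> a + b \<in> I" unfolding UEA_ideal_def by (rule TI_add)
lemma I_diff: "a \<in> I \<Longrightarrow> b \<in> I \<Longrightarrow> a - b \<in> I" unfolding UEA_ideal_def by (rule TI_diff)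
lemma I_uminus: "a \<in> I \<Longrightarrow> - a \<in> I" unfolding UEA_ideal_def by (rule TI_uminus)
lemma I_lmult: "a \<in> I \<Longrightarrow> c * a \<in> I" unfolding UEA_ideal_def by (rule TI_lmult)
lemma I_rmult: "a \<in> I \<Longrightarrow> a * c \<in> I" unfolding UEA_ideal_def by (rule TI_rmult)
lemma I_zero: "0 \<in> I" unfolding UEA_ideal_def by (rule TI_zero)
lemma I_sum: "(\<And>x. x \<in> X \<Longrightarrow> f x \<in> I) \<Longrightarrow> sum f X \<in> I" unfolding UEA_ideal_def by (rule TI_sum)

lemma R1: "iS (s + t) - iS s - iS t \<in> I" by (rule I_rel, unfold UEA_relations_def fmult_eq, rule UnI1, rule UnI1, rule UnI1, rule UnI1, rule UnI1, rule UnI1, rule UnI1, blast)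
lemma R2: "iS (s * t) - iS s * iS t \<in> I" by (rule I_rel, unfold UEA_relations_def fmult_eq, rule UnI1, rule UnI1, rule UnI1, rule UnI1, rule UnI1, rule UnI1, rule UnI2, blast)
lemma R3: "iS (Const c) - fconst c \<in> I" by (rule I_rel, unfold UEA_relations_def fmult_eq, rule UnI1, rule UnI1, rule UnI1, rule UnI1, rule UnI1, rule UnI2, blast)
lemma R4: "D \<in> L \<Longrightarrow> E \<in> L \<Longrightarrow> iL (\<lambda>f. D f + E f) - iL D - iL E \<in> I"
  by (rule I_rel, unfold UEA_relations_def fmult_eq, rule UnI1, rule UnI1, rule UnI1, rule UnI1, rule UnI2, blast)
lemma R5: "D \<in> L \<Longrightarrow> iL (\<lambda>f. s * D f) - iS s * iL D \<in> I"
  by (rule I_rel, unfold UEA_relations_def fmult_eq, rule UnI1, rule UnI1, rule UnI1, rule UnI2, blast)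
lemma R6: "D \<in> L \<Longrightarrow> E \<in> L \<Longrightarrow> iL D * iL E - iL E * iL D - iL (\<lambda>f. D (E f) - E (D f)) \<in> I"
  by (rule I_rel, unfold UEA_relations_def fmult_eq, rule UnI1, rule UnI1, rule UnI2, blast)
lemma R7: "D \<in> L \<Longrightarrow> iL D * iS s - iS s * iL D - iS (D s) \<in> I"
  by (rule I_rel, unfold UEA_relations_def fmult_eq, rule UnI1, rule UnI2, blast)
lemma R8: "D \<notin> L \<Longrightarrow> iL D \<in> I"
  by (rule I_rel, unfold UEA_relations_def fmult_eq, rule UnI2, blast)

lemma iS_zero: "iS 0 \<in> I"
  using I_uminus[OF R1[of 0 0]] by simp

lemma fconst_m1: "fconst (-1) = (-1 :: (('n,'k) lrgen, 'k) freealg)"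
  by (simp add: fconst_def single_uminus one_fa)
lemma fconst_1: "fconst 1 = (1 :: (('n,'k) lrgen, 'k) freealg)"
  by (simp add: fconst_def one_fa)

definition Aw :: "'n list \<Rightarrow> (('n,'k) lrgen, 'k) freealg" where
  "Aw w = prod_list (map (\<lambda>i. iL (\<alpha> i)) w)"

lemma Aw_Nil [simp]: "Aw [] = 1" by (simp add: Aw_def)
lemma Aw_Cons: "Aw (i # w) = iL (\<alpha> i) * Aw w" by (simp add: Aw_def)
lemma Aw_append: "Aw (u @ v) = Aw u * Aw v" by (simp add: Aw_def)

inductive_set NF :: "nat \<Rightarrow> (('n,'k) lrgen, 'k) freealg set" for m where
  gen: "length w \<le> m \<Longrightarrow> iS s * Aw w \<in> NF m"
| add: "a \<in> NF m \<Longrightarrow> b \<in> NF m \<Longrightarrow> a + b \<in> NF m"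
| ideal: "a \<in> I \<Longrightarrow> a \<in> NF m"

lemma NF_zero: "0 \<in> NF m" by (rule NF.ideal[OF I_zero])

lemma NF_cong: "a \<in> NF m \<Longrightarrow> a - b \<in> I \<Longrightarrow> b \<in> NF m"
proof -
  assume a: "a \<in> NF m" and ab: "a - b \<in> I"
  have "a + - (a - b) \<in> NF m" using NF.add[OF a NF.ideal[OF I_uminus[OF ab]]] .
  then show ?thesis by simp
qed

lemma NF_cong': "a \<in> NF m \<Longrightarrow> a - b = c \<Longrightarrow> c \<in> I \<Longrightarrow> b \<in> NF m"
  using NF_cong by blast

lemma NF_mono: "a \<in> NF m \<Longrightarrow> m \<le> m' \<Longrightarrow> a \<in> NF m'"
  by (induction a rule: NF.induct) (auto intro: NF.intros)

lemma NF_lS: "a \<in> NF m \<Longrightarrow> iS t * a \<in> NF m"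
proof (induction a rule: NF.induct)
  case (gen w s)
  have "iS (t * s) * Aw w \<in> NF m" using gen by (rule NF.gen)
  moreover have "iS (t * s) * Aw w - iS t * (iS s * Aw w) = (iS (t * s) - iS t * iS s) * Aw w"
    by (simp add: algebra_simps)
  ultimately show ?case using NF_cong' I_rmult[OF R2] by blast
next
  case (add a b) then show ?case by (simp add: distrib_left NF.add)
next
  case (ideal a) then show ?case by (simp add: I_lmult NF.ideal)
qed

lemma NF_neg: "a \<in> NF m \<Longrightarrow> - a \<in> NF m"
proof -
  assume a: "a \<in> NF m"
  have "iS (Const (-1)) * a \<in> NF m" using NF_lS[OF a] .
  moreover have "iS (Const (-1)) * a - (- a) = (iS (Const (-1)) - fconst (-1)) * a"
    by (simp add: algebra_simps fconst_m1)
  ultimately show ?thesis using NF_cong' I_rmult[OF R3] by blast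
qed

lemma NF_diff: "a \<in> NF m \<Longrightarrow> b \<in> NF m \<Longrightarrow> a - b \<in> NF m"
  using NF.add[OF _ NF_neg] by (simp only: diff_conv_add_uminus)

lemma NF_sum: "(\<And>x. x \<in> X \<Longrightarrow> f x \<in> NF m) \<Longrightarrow> sum f X \<in> NF m"
  by (induction X rule: infinite_finite_induct) (auto intro: NF_zero NF.add)

lemma NF_sum_list: "(\<And>x. x \<in> set xs \<Longrightarrow> f x \<in> NF m) \<Longrightarrow> sum_list (map f xs) \<in> NF m"
  by (induction xs) (auto intro: NF_zero NF.add)

lemma NF_one: "1 \<in> NF 0"
proof -
  have "iS (Const 1) * Aw [] \<in> NF 0" by (rule NF.gen) simp
  then have "iS (Const 1) \<in> NF 0" by simp
  then show ?thesis using NF_cong R3[of 1] fconst_1 by simp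
qed

lemma NF_lA: "a \<in> NF m \<Longrightarrow> iL (\<alpha> i) * a \<in> NF (Suc m)"
proof (induction a rule: NF.induct)
  case (gen w s)
  have "iS s * Aw (i # w) + iS (\<alpha> i s) * Aw w \<in> NF (Suc m)"
    using gen by (intro NF.add NF.gen) auto
  moreover have "iS s * Aw (i # w) + iS (\<alpha> i s) * Aw w - iL (\<alpha> i) * (iS s * Aw w)
     = - ((iL (\<alpha> i) * iS s - iS s * iL (\<alpha> i) - iS (\<alpha> i s)) * Aw w)"
    by (simp add: algebra_simps Aw_Cons)
  ultimately show ?case using NF_cong' I_uminus[OF I_rmult[OF R7[OF L_alpha]]] by blast
next
  case (add a b) then show ?case by (simp add: distrib_left NF.add)
next
  case (ideal a) then show ?case by (simp add: I_lmult NF.ideal)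
qed

lemma L_lin: "(\<lambda>f. \<Sum>i\<in>X. s i * \<alpha> i f) \<in> L \<and> iL (\<lambda>f. \<Sum>i\<in>X. s i * \<alpha> i f) - (\<Sum>i\<in>X. iS (s i) * iL (\<alpha> i)) \<in> I"
proof (induction X rule: infinite_finite_induct)
  case (infinite X)
  have "iL (\<lambda>f. 0 + 0) - iL (\<lambda>f. 0) - iL (\<lambda>f. 0) \<in> I" using R4[OF L_zero L_zero] by simp
  then have "- iL (\<lambda>f. 0) \<in> I" by simp
  then have "iL (\<lambda>f. 0) \<in> I" using I_uminus by fastforce
  then show ?case using infinite by (simp add: L_zero)
next
  case empty
  have "iL (\<lambda>f. 0 + 0) - iL (\<lambda>f. 0) - iL (\<lambda>f. 0) \<in> I" using R4[OF L_zero L_zero] by simp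
  then have "- iL (\<lambda>f. 0) \<in> I" by simp
  then have "iL (\<lambda>f. 0) \<in> I" using I_uminus by fastforce
  then show ?case by (simp add: L_zero)
next
  case (insert x F)
  let ?D1 = "\<lambda>f. s x * \<alpha> x f" and ?D2 = "\<lambda>f. \<Sum>i\<in>F. s i * \<alpha> i f"
  have d1: "?D1 \<in> L" by (rule L_smult[OF L_alpha])
  have d2: "?D2 \<in> L" using insert by simp
  have eq: "(\<lambda>f. \<Sum>i\<in>insert x F. s i * \<alpha> i f) = (\<lambda>f. ?D1 f + ?D2 f)"
    using insert by simp
  have "iL (\<lambda>f. ?D1 f + ?D2 f) - iL ?D1 - iL ?D2 \<in> I" by (rule R4[OF d1 d2])
  moreover have "iL ?D1 - iS (s x) * iL (\<alpha> x) \<in> I" by (rule R5[OF L_alpha])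
  moreover have "iL ?D2 - (\<Sum>i\<in>F. iS (s i) * iL (\<alpha> i)) \<in> I" using insert by simp
  ultimately have "(iL (\<lambda>f. ?D1 f + ?D2 f) - iL ?D1 - iL ?D2) + (iL ?D1 - iS (s x) * iL (\<alpha> x))
     + (iL ?D2 - (\<Sum>i\<in>F. iS (s i) * iL (\<alpha> i))) \<in> I" by (intro I_add)
  then show ?case using insert eq L_add[OF d1 d2] by (simp add: algebra_simps)
qed

lemma NF_lL: "D \<in> L \<Longrightarrow> a \<in> NF m \<Longrightarrow> iL D * a \<in> NF (Suc m)"
proof -
  assume D: "D \<in> L" and a: "a \<in> NF m"
  obtain s where s: "D = (\<lambda>f. \<Sum>i\<in>UNIV. s i * \<alpha> i f)" using L_basis[OF D] by blast
  have "(\<Sum>i\<in>UNIV. iS (s i) * (iL (\<alpha> i) * a)) \<in> NF (Suc m)"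
    by (intro NF_sum NF_lS NF_lA a)
  moreover have "(\<Sum>i\<in>UNIV. iS (s i) * (iL (\<alpha> i) * a)) - iL D * a
     = - ((iL D - (\<Sum>i\<in>UNIV. iS (s i) * iL (\<alpha> i))) * a)"
    by (simp add: algebra_simps sum_distrib_right)
  moreover have "- ((iL D - (\<Sum>i\<in>UNIV. iS (s i) * iL (\<alpha> i))) * a) \<in> I"
    using I_uminus[OF I_rmult] L_lin s by blast
  ultimately show ?thesis using NF_cong' by blast
qed

lemma NF_lgen: "a \<in> NF m \<Longrightarrow> fgen x * a \<in> NF (Suc m)"
proof (cases x)
  case (Inl s)
  assume "a \<in> NF m"
  then have "iS s * a \<in> NF (Suc m)" using NF_lS NF_mono by (meson le_SucI order_refl)
  then show ?thesis using Inl by (simp add: iS_def)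
next
  case (Inr D)
  assume a: "a \<in> NF m"
  show ?thesis
  proof (cases "D \<in> L")
    case True then show ?thesis using Inr NF_lL[OF True a] by (simp add: iL_def)
  next
    case False then show ?thesis using Inr I_rmult[OF R8[OF False]] NF.ideal by (simp add: iL_def)
  qed
qed

lemma NF_single: "Poly_Mapping.single w c \<in> NF (length w)"
proof (induction w)
  case Nil
  have "iS (Const c) * Aw [] \<in> NF 0" by (rule NF.gen) simp
  then have "iS (Const c) \<in> NF 0" by simp
  then show ?case using NF_cong R3[of c] by (simp add: fconst_def)
next
  case (Cons x w)
  have "Poly_Mapping.single (x # w) c = fgen x * Poly_Mapping.single w c"
    by (simp add: fgen_def mult_single plus_list_def)
  then show ?case using NF_lgen[OF Cons] by simp
qed

lemma NF_all: "\<exists>m. p \<in> NF m"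
proof -
  let ?m = "Max (length ` Poly_Mapping.keys p)"
  have "(\<Sum>w\<in>Poly_Mapping.keys p. Poly_Mapping.single w (Poly_Mapping.lookup p w)) \<in> NF ?m"
    by (intro NF_sum NF_mono[OF NF_single]) auto
  then show ?thesis by (subst pm_sum_singles) blast
qed

lemma NF_rA: "a \<in> NF m \<Longrightarrow> a * Aw v \<in> NF (m + length v)"
proof (induction a rule: NF.induct)
  case (gen w s) then show ?case by (simp add: mult.assoc Aw_append[symmetric] NF.gen)
next
  case (add a b) then show ?case by (simp add: distrib_right NF.add)
next
  case (ideal a) then show ?case by (simp add: I_rmult NF.ideal)
qed

lemma NF_lAw: "a \<in> NF m \<Longrightarrow> Aw u * a \<in> NF (m + length u)"
proof (induction u arbitrary: m a)
  case Nil then show ?case by simp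
next
  case (Cons i u)
  have "Aw u * a \<in> NF (m + length u)" using Cons by blast
  then have "iL (\<alpha> i) * (Aw u * a) \<in> NF (Suc (m + length u))" by (rule NF_lA)
  then show ?case by (simp add: Aw_Cons mult.assoc)
qed

lemma NF_iL: "D \<in> L \<Longrightarrow> iL D \<in> NF 1"
  using NF_lL[OF _ NF_one, of D] by simp

lemma NF_comm: "iL (\<alpha> i) * iL (\<alpha> j) - iL (\<alpha> j) * iL (\<alpha> i) \<in> NF 1"
proof -
  have "iL (\<lambda>f. \<alpha> i (\<alpha> j f) - \<alpha> j (\<alpha> i f)) \<in> NF 1" by (intro NF_iL L_br L_alpha)
  moreover have "iL (\<lambda>f. \<alpha> i (\<alpha> j f) - \<alpha> j (\<alpha> i f)) - (iL (\<alpha> i) * iL (\<alpha> j) - iL (\<alpha> j) * iL (\<alpha> i))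
     = - (iL (\<alpha> i) * iL (\<alpha> j) - iL (\<alpha> j) * iL (\<alpha> i) - iL (\<lambda>f. \<alpha> i (\<alpha> j f) - \<alpha> j (\<alpha> i f)))"
    by simp
  ultimately show ?thesis using NF_cong' I_uminus[OF R6[OF L_alpha L_alpha, of i j]] by blast
qed

lemma NF_swap: "Aw (i # j # v) - Aw (j # i # v) \<in> NF (Suc (length v))"
proof -
  have "(iL (\<alpha> i) * iL (\<alpha> j) - iL (\<alpha> j) * iL (\<alpha> i)) * Aw v \<in> NF (1 + length v)"
    by (rule NF_rA[OF NF_comm])
  then show ?thesis by (simp add: Aw_Cons algebra_simps)
qed

lemma NF_insort: "Aw (i # v) - Aw (insort i v) \<in> NF (length v)"
proof (induction v)
  case Nil then show ?case by (simp add: NF_zero)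
next
  case (Cons j v)
  show ?case
  proof (cases "i \<le> j")
    case True then show ?thesis by (simp add: NF_zero)
  next
    case False
    have "iL (\<alpha> j) * (Aw (i # v) - Aw (insort i v)) \<in> NF (Suc (length v))" by (rule NF_lA[OF Cons])
    with NF_swap[of i j v] have "(Aw (i # j # v) - Aw (j # i # v)) + iL (\<alpha> j) * (Aw (i # v) - Aw (insort i v)) \<in> NF (Suc (length v))"
      by (rule NF.add)
    then show ?thesis using False by (simp add: Aw_Cons algebra_simps)
  qed
qed

lemma NF_sort: "Aw w - Aw (sort w) \<in> NF (length w - 1)"
proof (induction w)
  case Nil then show ?case by (simp add: NF_zero)
next
  case (Cons i w)
  have a: "iL (\<alpha> i) * (Aw w - Aw (sort w)) \<in> NF (length w)"
  proof (cases w)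
    case Nil then show ?thesis by (simp add: NF_zero)
  next
    case (Cons _ _) then show ?thesis using NF_lA[OF Cons.IH] by simp
  qed
  have b: "Aw (i # sort w) - Aw (insort i (sort w)) \<in> NF (length w)"
    using NF_insort[of i "sort w"] by simp
  have "iL (\<alpha> i) * (Aw w - Aw (sort w)) + (Aw (i # sort w) - Aw (insort i (sort w))) \<in> NF (length w)"
    by (rule NF.add[OF a b])
  then show ?case by (simp add: Aw_Cons algebra_simps)
qed

end

lemma VL:
  fixes h :: "nat \<Rightarrow> 'a::{idom,ring_char_0}"
  assumes z: "\<And>N. N \<ge> N0 \<Longrightarrow> (\<Sum>k\<le>d. of_nat N ^ k * h k) = 0"
    and k: "k \<le> d"
  shows "h k = 0"
proof -
  define p where "p = (\<Sum>j\<le>d. monom (h j) j)"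
  have ev: "poly p x = (\<Sum>j\<le>d. x ^ j * h j)" for x
    by (simp add: p_def poly_sum poly_monom mult.commute)
  have "p = 0"
  proof (rule ccontr)
    assume "p \<noteq> 0"
    then have fin: "finite {x. poly p x = 0}" by (rule poly_roots_finite)
    have "of_nat ` {N0..} \<subseteq> {x. poly p x = 0}"
      using z by (auto simp: ev)
    moreover have "infinite (of_nat ` {N0..} :: 'a set)"
    proof
      assume "finite (of_nat ` {N0..} :: 'a set)"
      moreover have "inj_on (of_nat :: nat \<Rightarrow> 'a) {N0..}" by (simp add: inj_on_def)
      ultimately have "finite {N0..}" by (rule finite_imageD)
      then show False using infinite_Ici by blast
    qed
    ultimately show False using fin finite_subset by blast
  qed
  then have "coeff p k = 0" by simp
  moreover have "coeff p k = h k"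
    using k by (simp add: p_def coeff_sum coeff_monom)
  ultimately show ?thesis by simp
qed


context tri
begin

definition aw :: "'n list \<Rightarrow> ('n,'k) mpoly \<Rightarrow> ('n,'k) mpoly" where
  "aw w f = foldr (\<lambda>i h. \<alpha> i h) w f"

lemma aw_Nil [simp]: "aw [] f = f" by (simp add: aw_def)
lemma aw_Cons [simp]: "aw (i # w) f = \<alpha> i (aw w f)" by (simp add: aw_def)

lemma rho_Aw: "rho (Aw w) f = aw w f"
  by (induction w) (auto simp: rho_one Aw_Cons rho_mult rho_iL L_alpha)

lemma alpha_of_nat_pow: "\<alpha> i (of_nat N ^ k * f) = of_nat N ^ k * \<alpha> i f"
  using D_of_nat[OF alpha_der[of i], of "N ^ k" f] by simp

lemma WL_step:
  fixes g F :: "('n,'k) mpoly" and c :: "nat \<Rightarrow> ('n,'k) mpoly" and i :: 'n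
  assumes IH: "g ^ l * F = g ^ N * (\<Sum>k\<le>l. of_nat N ^ k * c k)" and N: "N \<ge> 1"
  defines "c' \<equiv> \<lambda>k. (if k = 0 then 0 else \<alpha> i g * c (k - 1)) +
      (if k \<le> l then g * \<alpha> i (c k) - of_nat l * \<alpha> i g * c k else 0)"
  shows "g ^ Suc l * \<alpha> i F = g ^ N * (\<Sum>k\<le>Suc l. of_nat N ^ k * c' k)"
proof -
  let ?a = "\<alpha> i"
  define P where "P = (\<Sum>k\<le>l. of_nat N ^ k * c k)"
  have der: "is_derivation ?a" by (rule alpha_der)
  have aP: "?a P = (\<Sum>k\<le>l. of_nat N ^ k * ?a (c k))"
    by (simp add: P_def D_sum[OF der] alpha_of_nat_pow)
  have E1: "?a (g ^ l * F) = of_nat l * g ^ (l - 1) * ?a g * F + g ^ l * ?a F"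
    by (simp add: D_mult[OF der] D_power[OF der])
  have E2: "?a (g ^ N * P) = of_nat N * g ^ (N - 1) * ?a g * P + g ^ N * ?a P"
    by (simp add: D_mult[OF der] D_power[OF der])
  have IH': "g ^ l * F = g ^ N * P" using IH by (simp add: P_def)
  have gl: "of_nat l * (g * g ^ (l - 1)) = of_nat l * g ^ l"
    by (cases l) auto
  have gN: "g * g ^ (N - 1) = g ^ N" using N by (cases N) auto
  have "g ^ Suc l * ?a F = g * (g ^ l * ?a F)" by simp
  also have "g ^ l * ?a F = of_nat N * g ^ (N - 1) * ?a g * P + g ^ N * ?a P - of_nat l * g ^ (l - 1) * ?a g * F"
    using E1 E2 IH' by (simp add: algebra_simps)
  also have "g * (of_nat N * g ^ (N - 1) * ?a g * P + g ^ N * ?a P - of_nat l * g ^ (l - 1) * ?a g * F)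
     = of_nat N * (g * g ^ (N - 1)) * ?a g * P + g ^ N * g * ?a P - ?a g * (of_nat l * (g * g ^ (l - 1))) * F"
    by (simp add: algebra_simps)
  also have "\<dots> = g ^ N * (of_nat N * ?a g * P + g * ?a P - of_nat l * ?a g * P)"
    unfolding gl gN using IH' by (simp add: algebra_simps)
  also have "of_nat N * ?a g * P + g * ?a P - of_nat l * ?a g * P = (\<Sum>k\<le>Suc l. of_nat N ^ k * c' k)"
  proof -
    have s1: "(\<Sum>k\<le>Suc l. of_nat N ^ k * (if k = 0 then 0 else ?a g * c (k - 1))) = of_nat N * ?a g * P"
      by (subst sum.atMost_Suc_shift) (simp add: P_def sum_distrib_left algebra_simps del: sum.atMost_Suc)
    have s2: "(\<Sum>k\<le>Suc l. of_nat N ^ k * (if k \<le> l then g * ?a (c k) - of_nat l * ?a g * c k else 0))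
        = g * ?a P - of_nat l * ?a g * P"
      unfolding aP by (simp add: P_def sum_distrib_left sum_subtractf algebra_simps)
    show ?thesis unfolding c'_def distrib_left sum.distrib s1 s2 by (simp add: algebra_simps)
  qed
  finally show ?thesis .
qed

lemma WL: "\<exists>c. c (length w) = prod_list (map (\<lambda>i. \<alpha> i g) w) \<and>
   (\<forall>N \<ge> length w. g ^ length w * aw w (g ^ N) = g ^ N * (\<Sum>k\<le>length w. of_nat N ^ k * c k))"
proof (induction w)
  case Nil
  show ?case by (rule exI[of _ "\<lambda>k. 1"]) simp
next
  case (Cons i w)
  then obtain c where c1: "c (length w) = prod_list (map (\<lambda>i. \<alpha> i g) w)"
    and c2: "\<forall>N \<ge> length w. g ^ length w * aw w (g ^ N) = g ^ N * (\<Sum>k\<le>length w. of_nat N ^ k * c k)"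
    by blast
  let ?l = "length w"
  define c' where "c' \<equiv> \<lambda>k. (if k = 0 then 0 else \<alpha> i g * c (k - 1)) +
      (if k \<le> ?l then g * \<alpha> i (c k) - of_nat ?l * \<alpha> i g * c k else 0)"
  show ?case
  proof (rule exI[of _ c'], intro conjI allI impI)
    show "c' (length (i # w)) = prod_list (map (\<lambda>i. \<alpha> i g) (i # w))"
      by (simp add: c'_def c1)
    fix N assume N: "length (i # w) \<le> N"
    have "g ^ Suc ?l * \<alpha> i (aw w (g ^ N)) = g ^ N * (\<Sum>k\<le>Suc ?l. of_nat N ^ k * c' k)"
      unfolding c'_def by (rule WL_step) (use c2 N in auto)
    then show "g ^ length (i # w) * aw (i # w) (g ^ N) = g ^ N * (\<Sum>k\<le>length (i # w). of_nat N ^ k * c' k)"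
      by simp
  qed
qed

lemma sum_if_le: "(l::nat) \<le> m \<Longrightarrow> (\<Sum>k\<le>m. (if k \<le> l then X k else 0)) = (\<Sum>k\<le>l. X k)"
proof -
  assume "l \<le> m"
  then have "{k \<in> {..m}. k \<le> l} = {..l}" by auto
  then show ?thesis using sum.inter_filter[of "{..m}" X "\<lambda>k. k \<le> l"] by simp
qed

lemma NL: "r \<in> NF m \<Longrightarrow> \<exists>c. \<forall>N \<ge> m. g ^ m * rho r (g ^ N) = g ^ N * (\<Sum>k\<le>m. of_nat N ^ k * c k)"
proof (induction r rule: NF.induct)
  case (gen w s)
  obtain c where c: "\<forall>N \<ge> length w. g ^ length w * aw w (g ^ N) = g ^ N * (\<Sum>k\<le>length w. of_nat N ^ k * c k)"
    using WL by blast
  let ?l = "length w"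
  define c' where "c' = (\<lambda>k. if k \<le> ?l then g ^ (m - ?l) * s * c k else 0)"
  show ?case
  proof (rule exI[of _ c'], intro allI impI)
    fix N assume N: "m \<le> N"
    have "g ^ m * rho (iS s * Aw w) (g ^ N) = g ^ (m - ?l) * s * (g ^ ?l * aw w (g ^ N))"
      using gen by (simp add: rho_mult rho_iS rho_Aw power_add[symmetric] algebra_simps)
    also have "\<dots> = g ^ (m - ?l) * s * (g ^ N * (\<Sum>k\<le>?l. of_nat N ^ k * c k))"
      using c N gen by auto
    also have "\<dots> = g ^ N * (\<Sum>k\<le>m. of_nat N ^ k * c' k)"
    proof -
      have "(\<Sum>k\<le>m. of_nat N ^ k * c' k) = (\<Sum>k\<le>m. if k \<le> ?l then of_nat N ^ k * (g ^ (m - ?l) * s * c k) else 0)"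
        by (rule sum.cong) (auto simp: c'_def)
      also have "\<dots> = (\<Sum>k\<le>?l. of_nat N ^ k * (g ^ (m - ?l) * s * c k))"
        using gen by (simp add: sum_if_le)
      finally show ?thesis by (simp add: sum_distrib_left algebra_simps)
    qed
    finally show "g ^ m * rho (iS s * Aw w) (g ^ N) = g ^ N * (\<Sum>k\<le>m. of_nat N ^ k * c' k)" .
  qed
next
  case (add a b)
  then obtain c1 c2 where c1: "\<forall>N \<ge> m. g ^ m * rho a (g ^ N) = g ^ N * (\<Sum>k\<le>m. of_nat N ^ k * c1 k)"
    and c2: "\<forall>N \<ge> m. g ^ m * rho b (g ^ N) = g ^ N * (\<Sum>k\<le>m. of_nat N ^ k * c2 k)" by blast
  show ?case
    by (rule exI[of _ "\<lambda>k. c1 k + c2 k"]) (use c1 c2 in \<open>simp add: rho_add distrib_left sum.distrib\<close>)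
next
  case (ideal a)
  show ?case by (rule exI[of _ "\<lambda>k. 0"]) (simp add: rho_I[OF ideal])
qed

end

context tri
begin

lemma prod_alpha_zero: "v \<noteq> [] \<Longrightarrow> prod_list (map (\<lambda>i. \<alpha> i 0) v) = 0"
  by (cases v) (auto simp: D_zero[OF alpha_der])

lemma SYM_a:
  assumes V: "finite V" "\<And>v. v \<in> V \<Longrightarrow> length v = Suc m'"
    and r: "r \<in> NF m'"
    and z: "\<And>f. rho ((\<Sum>v\<in>V. iS (c v) * Aw v) + r) f = 0"
  shows "(\<Sum>v\<in>V. c v * prod_list (map (\<lambda>i. \<alpha> i g) v)) = 0"
proof (cases "g = 0")
  case True
  have "prod_list (map (\<lambda>i. \<alpha> i g) v) = 0" if "v \<in> V" for v
    using V(2)[OF that] prod_alpha_zero[of v] True by fastforce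
  then show ?thesis by simp
next
  case False
  let ?d = "Suc m'"
  have "\<forall>v. \<exists>c. c (length v) = prod_list (map (\<lambda>i. \<alpha> i g) v) \<and>
   (\<forall>N \<ge> length v. g ^ length v * aw v (g ^ N) = g ^ N * (\<Sum>k\<le>length v. of_nat N ^ k * c k))"
    using WL by blast
  from choice[OF this] obtain C where C0: "\<forall>v. C v (length v) = prod_list (map (\<lambda>i. \<alpha> i g) v) \<and>
   (\<forall>N \<ge> length v. g ^ length v * aw v (g ^ N) = g ^ N * (\<Sum>k\<le>length v. of_nat N ^ k * C v k))"
    by blast
  have C: "\<And>v. C v (length v) = prod_list (map (\<lambda>i. \<alpha> i g) v)"
    "\<And>v N. N \<ge> length v \<Longrightarrow> g ^ length v * aw v (g ^ N) = g ^ N * (\<Sum>k\<le>length v. of_nat N ^ k * C v k)"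
    using C0 by blast+
  obtain e where e: "\<And>N. N \<ge> m' \<Longrightarrow> g ^ m' * rho r (g ^ N) = g ^ N * (\<Sum>k\<le>m'. of_nat N ^ k * e k)"
    using NL[OF r, of g] by blast
  define h where "h k = (\<Sum>v\<in>V. c v * C v k) + (if k \<le> m' then g * e k else 0)" for k
  have key: "(\<Sum>k\<le>?d. of_nat N ^ k * h k) = 0" if N: "N \<ge> ?d" for N
  proof -
    have "0 = g ^ ?d * rho ((\<Sum>v\<in>V. iS (c v) * Aw v) + r) (g ^ N)" using z by simp
    also have "\<dots> = (\<Sum>v\<in>V. c v * (g ^ ?d * aw v (g ^ N))) + g * (g ^ m' * rho r (g ^ N))"
      by (simp add: rho_add rho_sum rho_mult rho_iS rho_Aw distrib_left sum_distrib_left algebra_simps)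
    also have "(\<Sum>v\<in>V. c v * (g ^ ?d * aw v (g ^ N))) = (\<Sum>v\<in>V. c v * (g ^ N * (\<Sum>k\<le>?d. of_nat N ^ k * C v k)))"
    proof (rule sum.cong)
      fix v assume "v \<in> V"
      then have lv: "length v = ?d" by (rule V(2))
      show "c v * (g ^ ?d * aw v (g ^ N)) = c v * (g ^ N * (\<Sum>k\<le>?d. of_nat N ^ k * C v k))"
        using C(2)[of v N] N unfolding lv by simp
    qed simp
    also have "\<dots> = g ^ N * (\<Sum>k\<le>?d. of_nat N ^ k * (\<Sum>v\<in>V. c v * C v k))"
      by (simp add: sum_distrib_left sum.swap[of _ V] algebra_simps)
    also have "g * (g ^ m' * rho r (g ^ N)) = g ^ N * (\<Sum>k\<le>?d. of_nat N ^ k * (if k \<le> m' then g * e k else 0))"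
    proof -
      have "(\<Sum>k\<le>?d. of_nat N ^ k * (if k \<le> m' then g * e k else 0)) = (\<Sum>k\<le>?d. if k \<le> m' then of_nat N ^ k * (g * e k) else 0)"
        by (rule sum.cong) auto
      also have "\<dots> = (\<Sum>k\<le>m'. of_nat N ^ k * (g * e k))" by (simp add: sum_if_le)
      finally show ?thesis using e[of N] N by (simp add: sum_distrib_left algebra_simps)
    qed
    finally have "g ^ N * (\<Sum>k\<le>?d. of_nat N ^ k * h k) = 0"
      by (simp add: h_def distrib_left sum.distrib)
    then show ?thesis using False by simp
  qed
  have "h ?d = 0" by (rule VL[OF key]) auto
  then have "(\<Sum>v\<in>V. c v * C v ?d) = 0" by (simp add: h_def)
  moreover have "(\<Sum>v\<in>V. c v * C v ?d) = (\<Sum>v\<in>V. c v * prod_list (map (\<lambda>i. \<alpha> i g) v))"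
  proof (rule sum.cong)
    fix v assume v: "v \<in> V"
    show "c v * C v ?d = c v * prod_list (map (\<lambda>i. \<alpha> i g) v)"
      using C(1)[of v] V(2)[OF v] by simp
  qed simp
  ultimately show ?thesis by simp
qed

end

lemma digits_unique:
  fixes B :: nat
  assumes "\<forall>p<n. x p < B" "\<forall>p<n. y p < B" "(\<Sum>p<n. x p * B ^ p) = (\<Sum>p<n. y p * B ^ p)"
  shows "\<forall>p<n. x p = y p"
  using assms
proof (induction n arbitrary: x y)
  case 0 then show ?case by simp
next
  case (Suc n)
  have ex: "(\<Sum>p<Suc n. z p * B ^ p) = z 0 + B * (\<Sum>p<n. z (Suc p) * B ^ p)" for z :: "nat \<Rightarrow> nat"
  proof -
    have "(\<Sum>p<Suc n. z p * B ^ p) = z 0 * B ^ 0 + (\<Sum>p<n. z (Suc p) * B ^ Suc p)"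
      by (rule sum.lessThan_Suc_shift)
    also have "(\<Sum>p<n. z (Suc p) * B ^ Suc p) = B * (\<Sum>p<n. z (Suc p) * B ^ p)"
      by (simp add: sum_distrib_left mult.left_commute)
    finally show ?thesis by simp
  qed
  have x0: "x 0 < B" and y0: "y 0 < B" using Suc.prems by auto
  have eq: "x 0 + B * (\<Sum>p<n. x (Suc p) * B ^ p) = y 0 + B * (\<Sum>p<n. y (Suc p) * B ^ p)"
    using Suc.prems(3) ex[of x] ex[of y] by simp
  have "(x 0 + B * (\<Sum>p<n. x (Suc p) * B ^ p)) mod B = (y 0 + B * (\<Sum>p<n. y (Suc p) * B ^ p)) mod B"
    using eq by simp
  then have e0: "x 0 = y 0" using x0 y0 by simp
  have "B * (\<Sum>p<n. x (Suc p) * B ^ p) = B * (\<Sum>p<n. y (Suc p) * B ^ p)" using eq e0 by simp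
  moreover have "B > 0" using x0 by simp
  ultimately have "(\<Sum>p<n. x (Suc p) * B ^ p) = (\<Sum>p<n. y (Suc p) * B ^ p)" by simp
  moreover have "\<forall>p<n. x (Suc p) < B" using Suc.prems(1) by simp
  moreover have "\<forall>p<n. y (Suc p) < B" using Suc.prems(2) by simp
  ultimately have IH: "\<forall>p<n. x (Suc p) = y (Suc p)"
    using Suc.IH[of "\<lambda>p. x (Suc p)" "\<lambda>p. y (Suc p)"] by blast
  show ?case
  proof (intro allI impI)
    fix p assume "p < Suc n"
    then show "x p = y p" using e0 IH by (cases p) auto
  qed
qed
definition pos :: "'n::{finite,linorder} \<Rightarrow> nat" where
  "pos j = card {j'. j < j'}"

lemma pos_lt: "(i::'n::{finite,linorder}) < j \<Longrightarrow> pos j < pos i"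
  unfolding pos_def by (rule psubset_card_mono) auto

lemma pos_inj: "inj (pos :: 'n::{finite,linorder} \<Rightarrow> nat)"
proof (rule injI)
  fix i j :: 'n assume "pos i = pos j"
  then show "i = j" using pos_lt[of i j] pos_lt[of j i] by (cases i j rule: linorder_cases) auto
qed

lemma pos_bound: "pos (j::'n::{finite,linorder}) < card (UNIV :: 'n::{finite,linorder} set)"
  unfolding pos_def by (rule psubset_card_mono) auto

lemma pos_image: "range (pos :: 'n::{finite,linorder} \<Rightarrow> nat) = {..<card (UNIV :: 'n::{finite,linorder} set)}"
proof -
  have "range (pos :: 'n::{finite,linorder} \<Rightarrow> nat) \<subseteq> {..<card (UNIV :: 'n::{finite,linorder} set)}" using pos_bound by auto
  moreover have "card (range (pos :: 'n::{finite,linorder} \<Rightarrow> nat)) = card (UNIV :: 'n::{finite,linorder} set)" by (simp add: card_image[OF pos_inj])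
  ultimately show ?thesis by (intro card_subset_eq) auto
qed

lemma pos_digits:
  fixes a b :: "'n::{finite,linorder} \<Rightarrow> nat"
  assumes "\<forall>j. a j < B" "\<forall>j. b j < B" "(\<Sum>j\<in>UNIV. a j * B ^ pos j) = (\<Sum>j\<in>UNIV. b j * B ^ pos j)"
  shows "a = b"
proof -
  define P where "P = (pos :: 'n \<Rightarrow> nat)"
  have Pinj: "inj P" unfolding P_def by (rule pos_inj)
  have Pim: "range P = {..<card (UNIV :: 'n set)}" unfolding P_def by (rule pos_image)
  have Pb: "P j < card (UNIV :: 'n set)" for j unfolding P_def by (rule pos_bound)
  have re: "(\<Sum>j\<in>UNIV. z j * B ^ P j) = (\<Sum>p<card (UNIV :: 'n set). z (inv P p) * B ^ p)" for z :: "'n \<Rightarrow> nat"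
  proof -
    have "(\<Sum>p<card (UNIV :: 'n set). z (inv P p) * B ^ p) = (\<Sum>p\<in>range P. z (inv P p) * B ^ p)"
      by (simp add: Pim)
    also have "\<dots> = (\<Sum>j\<in>UNIV. z (inv P (P j)) * B ^ P j)"
      by (rule sum.reindex[OF Pinj, unfolded comp_def])
    also have "\<dots> = (\<Sum>j\<in>UNIV. z j * B ^ P j)" by (simp add: inv_f_f[OF Pinj])
    finally show ?thesis by simp
  qed
  have "\<forall>p<card (UNIV :: 'n set). a (inv P p) = b (inv P p)"
    by (rule digits_unique) (use assms re in \<open>auto simp: P_def\<close>)
  then have "a (inv P (P j)) = b (inv P (P j))" for j using Pb by blast
  then show ?thesis by (auto simp: inv_f_f[OF Pinj])
qed

lemma sorted_count_eq:
  assumes "sorted v" "sorted v'" "\<forall>j. count_list v j = count_list v' j"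
  shows "v = v'"
proof -
  have "mset v = mset v'" using assms(3) by (intro multiset_eqI) (simp add: count_mset)
  then have "sort v' = v" using assms(1) by (rule properties_for_sort)
  then show ?thesis using sorted_sort_id[OF assms(2)] by simp
qed

lemma E_inj:
  fixes v v' :: "'n::{finite,linorder} list"
  assumes "sorted v" "sorted v'" "length v \<le> d" "length v' \<le> d"
    and "sum_list (map (\<lambda>j. Suc d ^ pos j) v) = sum_list (map (\<lambda>j. Suc d ^ pos j) v')"
  shows "v = v'"
proof -
  have s: "sum_list (map (\<lambda>j. Suc d ^ pos j) w) = (\<Sum>j\<in>UNIV. count_list w j * Suc d ^ pos j)" for w :: "'n list"
    by (rule sum_list_map_eq_sum_count2) auto
  have "(\<lambda>j. count_list v j) = (\<lambda>j. count_list v' j)"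
  proof (rule pos_digits)
    show "\<forall>j. count_list v j < Suc d"
    proof
      fix j show "count_list v j < Suc d" using count_le_length[of v j] assms(3) by linarith
    qed
    show "\<forall>j. count_list v' j < Suc d"
    proof
      fix j show "count_list v' j < Suc d" using count_le_length[of v' j] assms(4) by linarith
    qed
    show "(\<Sum>j\<in>UNIV. count_list v j * Suc d ^ pos j) = (\<Sum>j\<in>UNIV. count_list v' j * Suc d ^ pos j)"
      using assms(5) s by simp
  qed
  then have "\<forall>j. count_list v j = count_list v' j" by (simp add: fun_eq_iff)
  from sorted_count_eq[OF assms(1,2) this] show ?thesis .
qed


context tri
begin

definition ee :: "nat \<Rightarrow> 'n \<Rightarrow> nat" where "ee d j = Suc d ^ pos j"

definition ell :: "nat \<Rightarrow> 'n \<Rightarrow> ('n,'k) mpoly poly" where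
  "ell d i = (\<Sum>j\<in>UNIV. monom (\<alpha> i (Var j)) (ee d j))"

definition Pw :: "nat \<Rightarrow> 'n list \<Rightarrow> ('n,'k) mpoly poly" where
  "Pw d v = prod_list (map (ell d) v)"

lemma ee_lt: "d \<ge> 1 \<Longrightarrow> i < j \<Longrightarrow> ee d j < ee d i"
  unfolding ee_def by (rule power_strict_increasing[OF pos_lt]) auto

lemma ee_inj: "d \<ge> 1 \<Longrightarrow> ee d i = ee d j \<Longrightarrow> i = j"
  using ee_lt[of d i j] ee_lt[of d j i] by (cases i j rule: linorder_cases) auto

lemma coeff_ell: "coeff (ell d i) n = (\<Sum>j\<in>UNIV. if ee d j = n then \<alpha> i (Var j) else 0)"
  by (simp add: ell_def coeff_sum coeff_monom)

lemma coeff_ell_top: "d \<ge> 1 \<Longrightarrow> coeff (ell d i) (ee d i) = \<alpha> i (Var i)"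
proof -
  assume d: "d \<ge> 1"
  have "coeff (ell d i) (ee d i) = (\<Sum>j\<in>UNIV. if j = i then \<alpha> i (Var j) else 0)"
    unfolding coeff_ell by (rule sum.cong) (use ee_inj[OF d] in auto)
  then show ?thesis by simp
qed

lemma coeff_ell_high: "d \<ge> 1 \<Longrightarrow> n > ee d i \<Longrightarrow> coeff (ell d i) n = 0"
proof -
  assume d: "d \<ge> 1" and n: "n > ee d i"
  have "(if ee d j = n then \<alpha> i (Var j) else 0) = 0" for j
  proof (cases "ee d j = n")
    case True
    have "j < i"
    proof (rule ccontr)
      assume "\<not> j < i"
      then have "j = i \<or> i < j" by auto
      then have "ee d j \<le> ee d i" using ee_lt[OF d, of i j] by auto
      then show False using True n by simp
    qed
    then show ?thesis by (simp add: alpha_tri)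
  qed simp
  then show ?thesis unfolding coeff_ell by simp
qed

lemma degree_ell: "d \<ge> 1 \<Longrightarrow> degree (ell d i) = ee d i"
proof (rule antisym)
  assume d: "d \<ge> 1"
  show "degree (ell d i) \<le> ee d i" by (rule degree_le) (use coeff_ell_high[OF d] in auto)
  show "ee d i \<le> degree (ell d i)" by (rule le_degree) (simp add: coeff_ell_top[OF d] alpha_diag)
qed

lemma lead_ell: "d \<ge> 1 \<Longrightarrow> lead_coeff (ell d i) = \<alpha> i (Var i)"
  by (simp add: degree_ell coeff_ell_top)

lemma ell_nz: "d \<ge> 1 \<Longrightarrow> ell d i \<noteq> 0"
  using lead_ell[of d i] alpha_diag[of i] by auto

lemma Pw_props: "d \<ge> 1 \<Longrightarrow> Pw d v \<noteq> 0 \<and> degree (Pw d v) = sum_list (map (ee d) v) \<and>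
    lead_coeff (Pw d v) = prod_list (map (\<lambda>i. \<alpha> i (Var i)) v)"
proof (induction v)
  case Nil then show ?case by (simp add: Pw_def)
next
  case (Cons i v)
  then have IH: "Pw d v \<noteq> 0" "degree (Pw d v) = sum_list (map (ee d) v)"
    "lead_coeff (Pw d v) = prod_list (map (\<lambda>i. \<alpha> i (Var i)) v)" by auto
  have P: "Pw d (i # v) = ell d i * Pw d v" by (simp add: Pw_def)
  have nz: "Pw d (i # v) \<noteq> 0" unfolding P using IH(1) ell_nz[OF Cons.prems] by simp
  have deg: "degree (Pw d (i # v)) = sum_list (map (ee d) (i # v))"
    unfolding P using IH ell_nz[OF Cons.prems] degree_ell[OF Cons.prems] by (simp add: degree_mult_eq)
  have "lead_coeff (Pw d (i # v)) = lead_coeff (ell d i) * lead_coeff (Pw d v)"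
    unfolding P by (rule lead_coeff_mult)
  then have lc: "lead_coeff (Pw d (i # v)) = prod_list (map (\<lambda>i. \<alpha> i (Var i)) (i # v))"
    by (simp only: lead_ell[OF Cons.prems] IH(3)) simp
  show ?case using nz deg lc by blast
qed

lemma alpha_gT: "\<alpha> i (\<Sum>j\<in>UNIV. of_nat T ^ ee d j * Var j) = poly (ell d i) (of_nat T)"
  unfolding of_nat_power[symmetric] D_sum[OF alpha_der] D_of_nat[OF alpha_der]
  by (simp add: ell_def poly_sum poly_monom mult.commute)

lemma poly_prod_map: "poly (prod_list (map f v)) x = prod_list (map (\<lambda>i. poly (f i) x) v)"
  by (induction v) auto

lemma poly_nat_zero:
  fixes p :: "('n,'k) mpoly poly"
  assumes "\<And>T. poly p (of_nat T) = 0" shows "p = 0"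
proof (rule ccontr)
  assume "p \<noteq> 0"
  then have fin: "finite {x. poly p x = 0}" by (rule poly_roots_finite)
  have "range (of_nat :: nat \<Rightarrow> ('n,'k) mpoly) \<subseteq> {x. poly p x = 0}" using assms by auto
  moreover have "infinite (range (of_nat :: nat \<Rightarrow> ('n,'k) mpoly))"
  proof
    assume "finite (range (of_nat :: nat \<Rightarrow> ('n,'k) mpoly))"
    moreover have "inj (of_nat :: nat \<Rightarrow> ('n,'k) mpoly)" by (simp add: inj_def)
    ultimately have "finite (UNIV :: nat set)" by (rule finite_imageD)
    then show False by simp
  qed
  ultimately show False using fin finite_subset by blast
qed

lemma SYM_b:
  assumes V: "finite V" "\<And>v. v \<in> V \<Longrightarrow> sorted v \<and> length v = d" and d: "d \<ge> 1"
    and z: "\<And>g. (\<Sum>v\<in>V. c v * prod_list (map (\<lambda>i. \<alpha> i g) v)) = 0"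
  shows "\<forall>v\<in>V. c v = 0"
proof (rule ccontr)
  assume "\<not> (\<forall>v\<in>V. c v = 0)"
  define V' where "V' = {v\<in>V. c v \<noteq> 0}"
  have V'ne: "V' \<noteq> {}" and V'fin: "finite V'" using \<open>\<not> (\<forall>v\<in>V. c v = 0)\<close> V(1) by (auto simp: V'_def)
  define E where "E v = sum_list (map (ee d) v)" for v
  define M where "M = Max (E ` V')"
  have "M \<in> E ` V'" unfolding M_def using V'ne V'fin by (intro Max_in) auto
  then obtain vs where vs: "vs \<in> V'" "E vs = M" by auto
  have Ele: "E v \<le> M" if "v \<in> V'" for v unfolding M_def using V'fin that by (intro Max_ge) auto
  define \<sigma> where "\<sigma> = (\<Sum>v\<in>V. smult (c v) (Pw d v))"
  have "\<sigma> = 0"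
  proof (rule poly_nat_zero)
    fix T
    have "poly \<sigma> (of_nat T) = (\<Sum>v\<in>V. c v * prod_list (map (\<lambda>i. \<alpha> i (\<Sum>j\<in>UNIV. of_nat T ^ ee d j * Var j)) v))"
      by (simp add: \<sigma>_def poly_sum Pw_def poly_prod_map alpha_gT)
    then show "poly \<sigma> (of_nat T) = 0" using z by simp
  qed
  have other: "c v * coeff (Pw d v) M = 0" if "v \<in> V" "v \<noteq> vs" for v
  proof (cases "c v = 0")
    case False
    then have v': "v \<in> V'" using that by (simp add: V'_def)
    have "E v \<noteq> M"
    proof
      assume "E v = M"
      then have "E v = E vs" using vs by simp
      then have "v = vs" unfolding E_def ee_def
        by (intro E_inj[of v vs d]) (use V(2) that vs(1) in \<open>auto simp: V'_def\<close>)
      then show False using that by simp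
    qed
    then have "E v < M" using Ele[OF v'] by simp
    then have "coeff (Pw d v) M = 0" using Pw_props[OF d, of v] by (intro coeff_eq_0) (simp add: E_def)
    then show ?thesis by simp
  qed simp
  have "coeff \<sigma> M = (\<Sum>v\<in>V. c v * coeff (Pw d v) M)" by (simp add: \<sigma>_def coeff_sum)
  also have "\<dots> = c vs * coeff (Pw d vs) M + (\<Sum>v\<in>V - {vs}. c v * coeff (Pw d v) M)"
    using vs(1) V(1) by (subst sum.remove) (auto simp: V'_def)
  also have "(\<Sum>v\<in>V - {vs}. c v * coeff (Pw d v) M) = 0" using other by (intro sum.neutral) auto
  also have "coeff (Pw d vs) M = prod_list (map (\<lambda>i. \<alpha> i (Var i)) vs)"
  proof -
    have hd: "degree (Pw d vs) = M" using Pw_props[OF d, of vs] vs(2) by (simp add: E_def)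
    have hl: "lead_coeff (Pw d vs) = prod_list (map (\<lambda>i. \<alpha> i (Var i)) vs)" using Pw_props[OF d, of vs] by blast
    show ?thesis using hl unfolding hd .
  qed
  finally have "coeff \<sigma> M = c vs * prod_list (map (\<lambda>i. \<alpha> i (Var i)) vs)" by simp
  moreover have "c vs \<noteq> 0" using vs(1) by (simp add: V'_def)
  moreover have "prod_list (map (\<lambda>i. \<alpha> i (Var i)) vs) \<noteq> 0"
    using alpha_diag by (auto simp: prod_list_zero_iff)
  ultimately have "coeff \<sigma> M \<noteq> 0" by simp
  then show False using \<open>\<sigma> = 0\<close> by simp
qed

end

context tri
begin

lemma iS_sum: "finite K \<Longrightarrow> iS (\<Sum>k\<in>K. s k) - (\<Sum>k\<in>K. iS (s k)) \<in> I"
proof (induction K rule: finite_induct)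
  case empty then show ?case using iS_zero by simp
next
  case (insert x F)
  have "(iS (s x + (\<Sum>k\<in>F. s k)) - iS (s x) - iS (\<Sum>k\<in>F. s k)) + (iS (\<Sum>k\<in>F. s k) - (\<Sum>k\<in>F. iS (s k))) \<in> I"
    using R1 insert.IH by (rule I_add)
  then show ?case using insert by (simp add: algebra_simps)
qed

lemma NF_rep_list: "p \<in> NF m \<Longrightarrow> \<exists>xs. (\<forall>x\<in>set xs. length (snd x) \<le> m) \<and>
   p - sum_list (map (\<lambda>x. iS (fst x) * Aw (snd x)) xs) \<in> I"
proof (induction p rule: NF.induct)
  case (gen w s)
  show ?case by (rule exI[of _ "[(s, w)]"]) (use gen I_zero in auto)
next
  case (add a b)
  then obtain xs ys where "\<forall>x\<in>set xs. length (snd x) \<le> m" "a - sum_list (map (\<lambda>x. iS (fst x) * Aw (snd x)) xs) \<in> I"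
    "\<forall>x\<in>set ys. length (snd x) \<le> m" "b - sum_list (map (\<lambda>x. iS (fst x) * Aw (snd x)) ys) \<in> I" by blast
  then show ?case
    by (intro exI[of _ "xs @ ys"]) (auto dest: I_add simp: algebra_simps)
next
  case (ideal a)
  show ?case by (rule exI[of _ "[]"]) (use ideal in simp)
qed

lemma NF_rep: "p \<in> NF m \<Longrightarrow> \<exists>(K::nat set) s w. finite K \<and> (\<forall>k\<in>K. length (w k) \<le> m) \<and>
   p - (\<Sum>k\<in>K. iS (s k) * Aw (w k)) \<in> I"
proof -
  assume "p \<in> NF m"
  then obtain xs where xs: "\<forall>x\<in>set xs. length (snd x) \<le> m" "p - sum_list (map (\<lambda>x. iS (fst x) * Aw (snd x)) xs) \<in> I"
    using NF_rep_list by blast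
  have "sum_list (map (\<lambda>x. iS (fst x) * Aw (snd x)) xs) = (\<Sum>k\<in>{0..<length xs}. iS (fst (xs ! k)) * Aw (snd (xs ! k)))"
    by (simp add: sum_list_sum_nth)
  moreover have "\<forall>k\<in>{0..<length xs}. length (snd (xs ! k)) \<le> m" using xs(1) by auto
  ultimately show ?thesis using xs(2)
    by (intro exI[of _ "{0..<length xs}"] exI[of _ "\<lambda>k. fst (xs ! k)"] exI[of _ "\<lambda>k. snd (xs ! k)"]) auto
qed

lemma faithful: "p \<in> NF m \<Longrightarrow> (\<And>f. rho p f = 0) \<Longrightarrow> p \<in> I"
proof (induction m arbitrary: p)
  case 0
  obtain K :: "nat set" and s w where K: "finite K" "\<forall>k\<in>K. length (w k) \<le> 0" "p - (\<Sum>k\<in>K. iS (s k) * Aw (w k)) \<in> I"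
    using NF_rep[OF 0(1)] by blast
  have "(\<Sum>k\<in>K. iS (s k) * Aw (w k)) = (\<Sum>k\<in>K. iS (s k))" using K(2) by simp
  then have pI: "p - iS (\<Sum>k\<in>K. s k) \<in> I" using I_diff[OF K(3) iS_sum[OF K(1), of s]] by simp
  have "rho (p - iS (\<Sum>k\<in>K. s k)) 1 = 0" by (rule rho_I[OF pI])
  then have "(\<Sum>k\<in>K. s k) = 0" using 0(2) by (simp add: rho_diff rho_iS)
  then have "iS (\<Sum>k\<in>K. s k) \<in> I" using iS_zero by simp
  then show ?case using I_add[OF pI] by force
next
  case (Suc m')
  let ?d = "Suc m'"
  obtain K :: "nat set" and s w where K: "finite K" "\<forall>k\<in>K. length (w k) \<le> ?d" "p - (\<Sum>k\<in>K. iS (s k) * Aw (w k)) \<in> I"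
    using NF_rep[OF Suc(2)] by blast
  define P where "P k \<longleftrightarrow> length (w k) = ?d" for k
  define Kt where "Kt = {k\<in>K. P k}"
  define key where "key k = sort (w k)" for k
  define R where "R = (\<Sum>k\<in>K. if P k then iS (s k) * (Aw (w k) - Aw (key k)) else iS (s k) * Aw (w k))"
  have R: "R \<in> NF m'" unfolding R_def
  proof (intro NF_sum)
    fix k assume k: "k \<in> K"
    show "(if P k then iS (s k) * (Aw (w k) - Aw (key k)) else iS (s k) * Aw (w k)) \<in> NF m'"
    proof (cases "P k")
      case True
      then show ?thesis using NF_lS[OF NF_sort[of "w k"]] by (simp add: P_def key_def)
    next
      case False
      then show ?thesis using K(2) k by (auto simp: P_def intro!: NF.gen)
    qed
  qed
  have split: "(\<Sum>k\<in>K. iS (s k) * Aw (w k)) = (\<Sum>k\<in>Kt. iS (s k) * Aw (key k)) + R"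
  proof -
    have "(\<Sum>k\<in>Kt. iS (s k) * Aw (key k)) = (\<Sum>k\<in>K. if P k then iS (s k) * Aw (key k) else 0)"
      unfolding Kt_def using K(1) by (simp add: sum.inter_filter)
    then show ?thesis unfolding R_def by (simp add: sum.distrib[symmetric] algebra_simps if_distrib cong: if_cong)
  qed
  define V where "V = key ` Kt"
  define c where "c v = (\<Sum>k\<in>{k\<in>Kt. key k = v}. s k)" for v
  have Vfin: "finite V" using K(1) by (simp add: V_def Kt_def)
  have Ktfin: "finite Kt" using K(1) by (simp add: Kt_def)
  have group: "(\<Sum>k\<in>Kt. iS (s k) * Aw (key k)) = (\<Sum>v\<in>V. (\<Sum>k\<in>{k\<in>Kt. key k = v}. iS (s k)) * Aw v)"
  proof -
    have "(\<Sum>v\<in>V. (\<Sum>k\<in>{k\<in>Kt. key k = v}. iS (s k)) * Aw v) = (\<Sum>v\<in>V. (\<Sum>k\<in>{k\<in>Kt. key k = v}. iS (s k) * Aw (key k)))"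
      by (simp add: sum_distrib_right)
    also have "\<dots> = (\<Sum>k\<in>Kt. iS (s k) * Aw (key k))"
      by (rule sum.group[OF Ktfin Vfin]) (simp add: V_def)
    finally show ?thesis by simp
  qed
  have gI: "(\<Sum>v\<in>V. (\<Sum>k\<in>{k\<in>Kt. key k = v}. iS (s k)) * Aw v) - (\<Sum>v\<in>V. iS (c v) * Aw v) \<in> I"
  proof -
    have eq: "(\<Sum>v\<in>V. (iS (c v) - (\<Sum>k\<in>{k\<in>Kt. key k = v}. iS (s k))) * Aw v)
       = (\<Sum>v\<in>V. iS (c v) * Aw v) - (\<Sum>v\<in>V. (\<Sum>k\<in>{k\<in>Kt. key k = v}. iS (s k)) * Aw v)"
      by (simp add: left_diff_distrib sum_subtractf)
    have mem: "(\<Sum>v\<in>V. (iS (c v) - (\<Sum>k\<in>{k\<in>Kt. key k = v}. iS (s k))) * Aw v) \<in> I"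
      unfolding c_def using Ktfin by (intro I_sum I_rmult iS_sum) simp
    from I_uminus[OF mem[unfolded eq]] show ?thesis by simp
  qed
  define Q where "Q = (\<Sum>v\<in>V. iS (c v) * Aw v) + R"
  have pQ: "p - Q \<in> I"
  proof -
    have eqQ: "p - Q = (p - (\<Sum>k\<in>K. iS (s k) * Aw (w k))) + ((\<Sum>v\<in>V. (\<Sum>k\<in>{k\<in>Kt. key k = v}. iS (s k)) * Aw v) - (\<Sum>v\<in>V. iS (c v) * Aw v))"
      unfolding Q_def split group by (simp add: algebra_simps)
    show ?thesis unfolding eqQ by (rule I_add[OF K(3) gI])
  qed
  have rQ: "rho Q f = 0" for f
  proof -
    have "rho Q f = rho p f - rho (p - Q) f" by (simp add: rho_diff)
    then show ?thesis using Suc(3) rho_I[OF pQ] by simp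
  qed
  have Vprop: "v \<in> V \<Longrightarrow> sorted v \<and> length v = ?d" for v
    by (auto simp: V_def Kt_def key_def P_def)
  have "\<forall>v\<in>V. c v = 0"
  proof (rule SYM_b[OF Vfin Vprop])
    show "1 \<le> ?d" by simp
    fix g
    show "(\<Sum>v\<in>V. c v * prod_list (map (\<lambda>i. \<alpha> i g) v)) = 0"
      by (rule SYM_a[OF Vfin _ R]) (use Vprop rQ in \<open>auto simp: Q_def\<close>)
  qed
  then have "(\<Sum>v\<in>V. iS (c v) * Aw v) \<in> I" using iS_zero by (intro I_sum I_rmult) auto
  note sI = this
  have eqR: "p - R = (p - Q) + (\<Sum>v\<in>V. iS (c v) * Aw v)" by (simp add: Q_def)
  have "p - R \<in> I" unfolding eqR by (rule I_add[OF pQ sI])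
  moreover have "rho R f = 0" for f
  proof -
    have "rho R f = rho p f - rho (p - R) f" by (simp add: rho_diff)
    then show ?thesis using Suc(3) rho_I[OF \<open>p - R \<in> I\<close>] by simp
  qed
  ultimately have "R \<in> I" "p - R \<in> I" using Suc.IH[OF R] by auto
  then show ?case using I_add by force
qed

end


context tri
begin

lemma main_inj: "iS s \<in> I \<Longrightarrow> s = 0"
  using rho_I[of "iS s" 1] by (simp add: rho_iS)

lemma main_if: "u - iS s \<in> I \<Longrightarrow> u * iS t - iS t * u \<in> I"
proof -
  assume u: "u - iS s \<in> I"
  have e: "u * iS t - iS t * u = (u - iS s) * iS t - iS t * (u - iS s)
     + ((iS (t * s) - iS t * iS s) - (iS (s * t) - iS s * iS t))"
    unfolding mult.commute[of t s] by (simp add: algebra_simps)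
  show ?thesis unfolding e
    by (intro I_add I_diff I_rmult I_lmult u R2)
qed

lemma main_only_if:
  assumes c: "\<And>s. u * iS s - iS s * u \<in> I"
  shows "\<exists>s. u - iS s \<in> I"
proof -
  define c0 where "c0 = rho u 1"
  have r: "rho u f = f * c0" for f
  proof -
    have "rho (u * iS f - iS f * u) 1 = 0" by (rule rho_I[OF c])
    then show ?thesis by (simp add: rho_diff rho_mult rho_iS c0_def)
  qed
  obtain m where m: "u - iS c0 \<in> NF m" using NF_all by blast
  have "u - iS c0 \<in> I"
    by (rule faithful[OF m]) (simp add: rho_diff rho_iS r mult.commute)
  then show ?thesis by blast
qed

end

theorem proposition3p3:
  fixes L :: "(('n::{finite,linorder}, 'k::field_char_0) mpoly \<Rightarrow> ('n, 'k) mpoly) set"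
    and \<alpha> :: "'n \<Rightarrow> ('n, 'k) mpoly \<Rightarrow> ('n, 'k) mpoly"
  assumes "triangularizable L \<alpha>"
  shows "(\<forall>s. iS s \<in> UEA_ideal L \<longrightarrow> s = 0) \<and>
         (\<forall>u :: (('n, 'k) lrgen, 'k) freealg.
            (\<forall>s. fmult u (iS s) - fmult (iS s) u \<in> UEA_ideal L) \<longleftrightarrow>
            (\<exists>s. u - iS s \<in> UEA_ideal L))"
proof -
  interpret tri L \<alpha> by (rule tri.intro[OF assms])
  have A: "\<forall>s. iS s \<in> UEA_ideal L \<longrightarrow> s = 0" using main_inj by blast
  have B: "(\<forall>s. fmult u (iS s) - fmult (iS s) u \<in> UEA_ideal L) \<longleftrightarrow> (\<exists>s. u - iS s \<in> UEA_ideal L)"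
    for u :: "(('n, 'k) lrgen, 'k) freealg"
  proof
    assume "\<forall>s. fmult u (iS s) - fmult (iS s) u \<in> UEA_ideal L"
    then have "\<And>s. u * iS s - iS s * u \<in> UEA_ideal L" by (simp add: fmult_eq)
    then show "\<exists>s. u - iS s \<in> UEA_ideal L" by (rule main_only_if)
  next
    assume "\<exists>s. u - iS s \<in> UEA_ideal L"
    then obtain s where s: "u - iS s \<in> UEA_ideal L" by blast
    show "\<forall>t. fmult u (iS t) - fmult (iS t) u \<in> UEA_ideal L"
      using main_if[OF s] by (simp add: fmult_eq)
  qed
  show ?thesis using A B by blast
qed


end
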